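(* In any additive poset, any set of pairwise independent nonzero elements is linearly independent over $\mathbb{Z}/2\mathbb{Z}$.
   Context: An additive poset is a pair $(A,\le)$ where $A$ is an abelian group and $\le$ is a partial order on $A$ such that for all $a,b,c\in A$: $(\ast)$ if $b\le a$ and $c\le a$ then $b+c\le a$; $(\ast\ast)$ if $a\le b$ and $a\le c$ then $a\le a+b+c$. Every element satisfies $a+a=0$, so $A$ is a $\mathbb{Z}/2\mathbb{Z}$-vector space. Elements $a,b\in A$ are called independent if $a\le a+b$; this relation is symmetric. *)

theory Defs
  imports Main
begin

text \<open>An additive poset: an abelian group (the carrier is the whole type 'a) together
  with a partial order le satisfying the two axioms (*) and (**).\<close>
definition additive_poset :: "('a::ab_group_add \<Rightarrow> 'a \<Rightarrow> bool) \<Rightarrow> bool" where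
  "additive_poset le \<longleftrightarrow>
     partial_order_on UNIV {(x, y). le x y} \<and>
     (\<forall>a b c. le b a \<and> le c a \<longrightarrow> le (b + c) a) \<and>
     (\<forall>a b c. le a b \<and> le a c \<longrightarrow> le a (a + b + c))"

definition poset_independent :: "('a::ab_group_add \<Rightarrow> 'a \<Rightarrow> bool) \<Rightarrow> 'a \<Rightarrow> 'a \<Rightarrow> bool" where
  "poset_independent le a b \<longleftrightarrow> le a (a + b)"

text \<open>Linear independence over Z/2Z: the only Z/2Z-linear combination (coefficients 0 or 1)
  of finitely many distinct elements of S that vanishes is the trivial one, i.e. no
  nonempty finite subset of S sums to 0.\<close>
definition lin_indep_Z2 :: "'a::ab_group_add set \<Rightarrow> bool" where
  "lin_indep_Z2 S \<longleftrightarrow> (\<forall>T. T \<subseteq> S \<and> finite T \<and> T \<noteq> {} \<longrightarrow> (\<Sum>x\<in>T. x) \<noteq> 0)"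

end

theory Submission
  imports Defs
begin

lemma ap_props:
  assumes "additive_poset le"
  shows "\<And>x. le x x" "\<And>x y. le x y \<Longrightarrow> le y x \<Longrightarrow> x = y"
    "\<And>x y z. le x y \<Longrightarrow> le y z \<Longrightarrow> le x z"
    "\<And>a b c. le b a \<Longrightarrow> le c a \<Longrightarrow> le (b + c) a"
    "\<And>a b c. le a b \<Longrightarrow> le a c \<Longrightarrow> le a (a + b + c)"
proof -
  have po: "partial_order_on UNIV {(x, y). le x y}"
    and s: "\<forall>a b c. le b a \<and> le c a \<longrightarrow> le (b + c) a"
    and ss: "\<forall>a b c. le a b \<and> le a c \<longrightarrow> le a (a + b + c)"
    using assms unfolding additive_poset_def by auto
  have r: "refl_on UNIV {(x, y). le x y}" and t: "trans {(x, y). le x y}"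
    and an: "antisym {(x, y). le x y}"
    using po unfolding partial_order_on_def preorder_on_def by auto
  show "\<And>x. le x x" using r unfolding refl_on_def by auto
  show "\<And>x y. le x y \<Longrightarrow> le y x \<Longrightarrow> x = y" using an unfolding antisym_def by auto
  show "\<And>x y z. le x y \<Longrightarrow> le y z \<Longrightarrow> le x z" using t unfolding trans_def by auto
  show "\<And>a b c. le b a \<Longrightarrow> le c a \<Longrightarrow> le (b + c) a" using s by blast
  show "\<And>a b c. le a b \<Longrightarrow> le a c \<Longrightarrow> le a (a + b + c)" using ss by blast
qed

lemma ap_char2:
  fixes le :: "'a::ab_group_add \<Rightarrow> 'a \<Rightarrow> bool" and x :: 'a
  assumes "additive_poset le"
  shows "x + x = 0"
proof -
  note P = ap_props[OF assms]
  have 1: "le x (x + x + x)" using P(5)[OF P(1) P(1)] .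
  have 2: "le (x + x) x" using P(4)[OF P(1) P(1)] .
  have 3: "le (x + (x + x)) x" using P(4)[OF P(1) 2] .
  have 4: "le (x + x + x) x" using 3 by (simp add: add.assoc)
  have "x + x + x = x" using P(2)[OF 4 1] .
  thus ?thesis by simp
qed

lemma ap_neg:
  fixes le :: "'a::ab_group_add \<Rightarrow> 'a \<Rightarrow> bool" and x :: 'a
  assumes "additive_poset le"
  shows "- x = x"
  using ap_char2[OF assms, of x] by (simp add: add_eq_0_iff)

lemma key:
  assumes ap: "additive_poset le"
    and ind: "\<forall>y\<in>R. le x (x + y)"
    and fin: "finite R"
  shows "le x (x + (\<Sum>y\<in>R. y))"
  using fin ind
proof (induction R rule: finite_induct)
  case empty
  then show ?case using ap_props(1)[OF ap] by simp
next
  case (insert y F)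
  have a: "le x (x + (\<Sum>y\<in>F. y))" using insert by simp
  have b: "le x (x + y)" using insert by simp
  have "le x (x + (x + (\<Sum>y\<in>F. y)) + (x + y))" using ap_props(5)[OF ap a b] .
  moreover have "x + (x + (\<Sum>y\<in>F. y)) + (x + y) = x + (\<Sum>y\<in>insert y F. y)"
  proof -
    have "x + (x + (\<Sum>y\<in>F. y)) + (x + y) = (x + x) + x + ((\<Sum>y\<in>F. y) + y)"
      by (simp add: algebra_simps)
    also have "\<dots> = x + ((\<Sum>y\<in>F. y) + y)" using ap_char2[OF ap, of x] by simp
    finally show ?thesis using insert by (simp add: add.commute)
  qed
  ultimately show ?case by simp
qed

theorem lemma4p2:
  fixes le :: "'a::ab_group_add \<Rightarrow> 'a \<Rightarrow> bool" and S :: "'a set"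
  assumes "additive_poset le"
    and "\<forall>x\<in>S. x \<noteq> 0"
    and "\<forall>x\<in>S. \<forall>y\<in>S. x \<noteq> y \<longrightarrow> poset_independent le x y"
  shows "lin_indep_Z2 S"
  unfolding lin_indep_Z2_def
proof (intro allI impI notI)
  fix T assume T: "T \<subseteq> S \<and> finite T \<and> T \<noteq> {}" and s: "(\<Sum>x\<in>T. x) = 0"
  obtain x where x: "x \<in> T" using T by blast
  show False
  proof (cases "T = {x}")
    case True
    then show ?thesis using s x T assms(2) by auto
  next
    case False
    then obtain y where y: "y \<in> T" "y \<noteq> x" using x by blast
    have gen: "le u v" if u: "u \<in> T" and v: "v \<in> T" and uv: "u \<noteq> v" for u v
    proof -
      define R where "R = T - {u, v}"
      have finR: "finite R" using T R_def by simp
      have indR: "\<forall>w\<in>R. le u (u + w)"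
      proof
        fix w assume "w \<in> R"
        hence "w \<in> S" "u \<noteq> w" using T by (auto simp: R_def)
        moreover have "u \<in> S" using T u by blast
        ultimately show "le u (u + w)" using assms(3) unfolding poset_independent_def by simp
      qed
      have k: "le u (u + (\<Sum>w\<in>R. w))" using key[OF assms(1) indR finR] .
      have "(\<Sum>w\<in>T. w) = u + (\<Sum>w\<in>T - {u}. w)"
        using T u by (meson sum.remove)
      also have "(\<Sum>w\<in>T - {u}. w) = v + (\<Sum>w\<in>R. w)"
      proof -
        have fT: "finite T" using T by blast
        show ?thesis unfolding R_def using fT u v uv
          by (metis Diff_insert2 finite_Diff insertE insert_Diff sum.remove)
      qed
      finally have "0 = u + (v + (\<Sum>w\<in>R. w))" using s by simp
      hence "u + (\<Sum>w\<in>R. w) + v = 0" by (metis add.assoc add.commute)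
      hence "u + (\<Sum>w\<in>R. w) = - v" by (simp add: eq_neg_iff_add_eq_0)
      hence "u + (\<Sum>w\<in>R. w) = v" using ap_neg[OF assms(1), of v] by simp
      thus ?thesis using k by simp
    qed
    have "le x y" using gen x y by auto
    moreover have "le y x" using gen x y by auto
    ultimately show False using ap_props(2)[OF assms(1)] y by blast
  qed
qed

end
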